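(* Let $A_1$ and $A_2$ be simple and covering atoms that are unifiable with a most general unifier $\sigma$, and suppose $A_1$ contains a compound term. Let $G$ be a flat literal and $\mathcal G$ a set of flat literals such that $\mathrm{Var}(A_1)=\mathrm{Var}(G)=\mathrm{Var}(\mathcal G)$. Then $G\sigma$ and every literal of $\mathcal G\sigma$ are flat, and $\mathrm{Var}(A_1\sigma)=\mathrm{Var}(G\sigma)=\mathrm{Var}(\mathcal G\sigma)$.
   Context: A compound term is a term that is neither a variable nor a constant. $\mathrm{Var}(E)$ denotes the set of variables of $E$. A literal is flat if each argument is a variable or a constant; it is simple if each argument is a variable, a constant, or a term $f(u_1,\dots,u_n)$ with each $u_i$ a variable or a constant. A literal is covering if every compound term $t$ occurring in it satisfies $\mathrm{Var}(t)$ equal to the set of variables of the literal (flat literals are trivially covering). *)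

theory Defs
  imports Main
begin

datatype ('f, 'v) trm = Var 'v | Fun 'f "('f, 'v) trm list"

datatype ('p, 'f, 'v) atom = Atom 'p "('f, 'v) trm list"

datatype ('p, 'f, 'v) literal = Pos "('p, 'f, 'v) atom" | Neg "('p, 'f, 'v) atom"

fun vars_trm :: "('f, 'v) trm \<Rightarrow> 'v set" where
  "vars_trm (Var x) = {x}"
| "vars_trm (Fun f ts) = (\<Union>t\<in>set ts. vars_trm t)"

fun args_atom :: "('p, 'f, 'v) atom \<Rightarrow> ('f, 'v) trm list" where
  "args_atom (Atom p ts) = ts"

fun atom_of :: "('p, 'f, 'v) literal \<Rightarrow> ('p, 'f, 'v) atom" where
  "atom_of (Pos a) = a"
| "atom_of (Neg a) = a"

definition vars_atom :: "('p, 'f, 'v) atom \<Rightarrow> 'v set" where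
  "vars_atom A = (\<Union>t\<in>set (args_atom A). vars_trm t)"

definition vars_lit :: "('p, 'f, 'v) literal \<Rightarrow> 'v set" where
  "vars_lit L = vars_atom (atom_of L)"

definition vars_lits :: "('p, 'f, 'v) literal set \<Rightarrow> 'v set" where
  "vars_lits Ls = (\<Union>L\<in>Ls. vars_lit L)"

fun subterms :: "('f, 'v) trm \<Rightarrow> ('f, 'v) trm set" where
  "subterms (Var x) = {Var x}"
| "subterms (Fun f ts) = insert (Fun f ts) (\<Union>t\<in>set ts. subterms t)"

definition is_var :: "('f, 'v) trm \<Rightarrow> bool" where
  "is_var t \<longleftrightarrow> (\<exists>x. t = Var x)"

definition is_const :: "('f, 'v) trm \<Rightarrow> bool" where
  "is_const t \<longleftrightarrow> (\<exists>c. t = Fun c [])"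

definition is_compound :: "('f, 'v) trm \<Rightarrow> bool" where
  "is_compound t \<longleftrightarrow> \<not> is_var t \<and> \<not> is_const t"

definition var_or_const :: "('f, 'v) trm \<Rightarrow> bool" where
  "var_or_const t \<longleftrightarrow> is_var t \<or> is_const t"

definition flat_atom :: "('p, 'f, 'v) atom \<Rightarrow> bool" where
  "flat_atom A \<longleftrightarrow> (\<forall>t\<in>set (args_atom A). var_or_const t)"

definition flat_lit :: "('p, 'f, 'v) literal \<Rightarrow> bool" where
  "flat_lit L \<longleftrightarrow> flat_atom (atom_of L)"

definition simple_atom :: "('p, 'f, 'v) atom \<Rightarrow> bool" where
  "simple_atom A \<longleftrightarrow> (\<forall>t\<in>set (args_atom A).
      var_or_const t \<or> (\<exists>f us. t = Fun f us \<and> (\<forall>u\<in>set us. var_or_const u)))"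

definition subterms_atom :: "('p, 'f, 'v) atom \<Rightarrow> ('f, 'v) trm set" where
  "subterms_atom A = (\<Union>t\<in>set (args_atom A). subterms t)"

definition covering_atom :: "('p, 'f, 'v) atom \<Rightarrow> bool" where
  "covering_atom A \<longleftrightarrow>
     (\<forall>t\<in>subterms_atom A. is_compound t \<longrightarrow> vars_trm t = vars_atom A)"

definition contains_compound :: "('p, 'f, 'v) atom \<Rightarrow> bool" where
  "contains_compound A \<longleftrightarrow> (\<exists>t\<in>subterms_atom A. is_compound t)"

type_synonym ('f, 'v) subst = "'v \<Rightarrow> ('f, 'v) trm"

fun subst_trm :: "('f, 'v) trm \<Rightarrow> ('f, 'v) subst \<Rightarrow> ('f, 'v) trm" where
  "subst_trm (Var x) \<sigma> = \<sigma> x"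
| "subst_trm (Fun f ts) \<sigma> = Fun f (map (\<lambda>t. subst_trm t \<sigma>) ts)"

fun subst_atom :: "('p, 'f, 'v) atom \<Rightarrow> ('f, 'v) subst \<Rightarrow> ('p, 'f, 'v) atom" where
  "subst_atom (Atom p ts) \<sigma> = Atom p (map (\<lambda>t. subst_trm t \<sigma>) ts)"

fun subst_lit :: "('p, 'f, 'v) literal \<Rightarrow> ('f, 'v) subst \<Rightarrow> ('p, 'f, 'v) literal" where
  "subst_lit (Pos a) \<sigma> = Pos (subst_atom a \<sigma>)"
| "subst_lit (Neg a) \<sigma> = Neg (subst_atom a \<sigma>)"

definition subst_lits :: "('p, 'f, 'v) literal set \<Rightarrow> ('f, 'v) subst \<Rightarrow> ('p, 'f, 'v) literal set" where
  "subst_lits Ls \<sigma> = (\<lambda>L. subst_lit L \<sigma>) ` Ls"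

definition is_unifier :: "('f, 'v) subst \<Rightarrow> ('p, 'f, 'v) atom \<Rightarrow> ('p, 'f, 'v) atom \<Rightarrow> bool" where
  "is_unifier \<sigma> A B \<longleftrightarrow> subst_atom A \<sigma> = subst_atom B \<sigma>"

definition is_mgu :: "('f, 'v) subst \<Rightarrow> ('p, 'f, 'v) atom \<Rightarrow> ('p, 'f, 'v) atom \<Rightarrow> bool" where
  "is_mgu \<sigma> A B \<longleftrightarrow> is_unifier \<sigma> A B \<and>
     (\<forall>\<tau>. is_unifier \<tau> A B \<longrightarrow> (\<exists>\<delta>. \<forall>x. \<tau> x = subst_trm (\<sigma> x) \<delta>))"

end

theory Submission
  imports Defs
begin

lemma vc_cases: "var_or_const t \<Longrightarrow> (\<exists>x. t = Var x) \<or> (\<exists>c. t = Fun c [])"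
  by (auto simp: var_or_const_def is_var_def is_const_def)

lemma comp_iff: "is_compound t \<longleftrightarrow> \<not> var_or_const t"
  by (simp add: is_compound_def var_or_const_def)

lemma compound_Fun: "is_compound t \<Longrightarrow> \<exists>f us. t = Fun f us \<and> us \<noteq> []"
  by (cases t) (auto simp: is_compound_def is_var_def is_const_def)

lemma size_arg: "t \<in> set ts \<Longrightarrow> size t < size (Fun f ts)"
  by (induct ts) auto

lemma vars_subst: "vars_trm (subst_trm t \<sigma>) = (\<Union>x\<in>vars_trm t. vars_trm (\<sigma> x))"
  by (induct t) auto

lemma vc_subst: "var_or_const (subst_trm t \<delta>) \<Longrightarrow> var_or_const t"
  by (cases t) (auto simp: var_or_const_def is_var_def is_const_def)

lemma direct_var: "\<forall>u\<in>set us. var_or_const u \<Longrightarrow> x \<in> vars_trm (Fun f us) \<Longrightarrow> Var x \<in> set us"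
  by (auto simp: var_or_const_def is_var_def is_const_def)

lemma self_subterm: "t \<in> subterms t"
  by (cases t) auto

lemma covering_arg: "covering_atom A \<Longrightarrow> t \<in> set (args_atom A) \<Longrightarrow> is_compound t \<Longrightarrow> vars_trm t = vars_atom A"
  unfolding covering_atom_def subterms_atom_def using self_subterm by blast

lemma simple_arg: "simple_atom A \<Longrightarrow> t \<in> set (args_atom A) \<Longrightarrow> is_compound t \<Longrightarrow>
   \<exists>f us. t = Fun f us \<and> us \<noteq> [] \<and> (\<forall>u\<in>set us. var_or_const u)"
  unfolding simple_atom_def using compound_Fun comp_iff by fastforce

lemma vc_subterms: "var_or_const t \<Longrightarrow> subterms t = {t}"
  by (auto simp: var_or_const_def is_var_def is_const_def)

lemma compound_top: "simple_atom A \<Longrightarrow> contains_compound A \<Longrightarrow> \<exists>C\<in>set (args_atom A). is_compound C"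
proof -
  assume s: "simple_atom A" and c: "contains_compound A"
  then obtain t u where t: "t \<in> set (args_atom A)" and u: "u \<in> subterms t" "is_compound u"
    unfolding contains_compound_def subterms_atom_def by blast
  show ?thesis
  proof (cases "var_or_const t")
    case True then show ?thesis using u vc_subterms comp_iff by force
  next
    case False
    then obtain f us where "t = Fun f us" "\<forall>u\<in>set us. var_or_const u"
      using s t unfolding simple_atom_def by blast
    then show ?thesis using u t False comp_iff vc_subterms by (force)
  qed
qed

lemma vc_subst_vc: "var_or_const t \<Longrightarrow> (\<forall>x\<in>vars_trm t. var_or_const (\<sigma> x)) \<Longrightarrow> var_or_const (subst_trm t \<sigma>)"
  by (auto simp: var_or_const_def is_var_def is_const_def)


lemma size_sub_arg: "u \<in> set us \<Longrightarrow> size (subst_trm u \<sigma>) < size (subst_trm (Fun f us) \<sigma>)"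
  using size_arg[of "subst_trm u \<sigma>" "map (\<lambda>t. subst_trm t \<sigma>) us" f] by simp

lemma key:
  fixes A1 A2 :: "('p,'f,'v) atom" and \<sigma> :: "('f,'v) subst"
  assumes s1: "simple_atom A1" and c1: "covering_atom A1"
    and s2: "simple_atom A2" and c2: "covering_atom A2"
    and u: "is_unifier \<sigma> A1 A2" and cc: "contains_compound A1"
  shows "\<exists>\<theta>. is_unifier \<theta> A1 A2 \<and> (\<forall>x\<in>vars_atom A1. var_or_const (\<theta> x))"
proof -
  obtain p ss where A1: "A1 = Atom p ss" by (cases A1)
  obtain q ts where A2: "A2 = Atom q ts" by (cases A2)
  have pq: "p = q" and hmap: "map (\<lambda>t. subst_trm t \<sigma>) ss = map (\<lambda>t. subst_trm t \<sigma>) ts"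
    using u by (auto simp: is_unifier_def A1 A2)
  have len: "length ss = length ts" using hmap map_eq_imp_length_eq by blast
  have eqj: "subst_trm (ss!j) \<sigma> = subst_trm (ts!j) \<sigma>" if "j < length ss" for j
    using hmap that len by (metis nth_map)
  have V1: "vars_atom A1 = (\<Union>t\<in>set ss. vars_trm t)" by (simp add: vars_atom_def A1)
  have V2: "vars_atom A2 = (\<Union>t\<in>set ts. vars_trm t)" by (simp add: vars_atom_def A2)
  have simp1: "\<And>t. t \<in> set ss \<Longrightarrow> is_compound t \<Longrightarrow> \<exists>f us. t = Fun f us \<and> us \<noteq> [] \<and> (\<forall>u\<in>set us. var_or_const u)"
    using simple_arg[OF s1] A1 by simp
  have simp2: "\<And>t. t \<in> set ts \<Longrightarrow> is_compound t \<Longrightarrow> \<exists>f us. t = Fun f us \<and> us \<noteq> [] \<and> (\<forall>u\<in>set us. var_or_const u)"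
    using simple_arg[OF s2] A2 by simp
  have cov1: "\<And>t. t \<in> set ss \<Longrightarrow> is_compound t \<Longrightarrow> vars_trm t = vars_atom A1"
    using covering_arg[OF c1] A1 by simp
  have cov2: "\<And>t. t \<in> set ts \<Longrightarrow> is_compound t \<Longrightarrow> vars_trm t = vars_atom A2"
    using covering_arg[OF c2] A2 by simp
  obtain C where C: "C \<in> set ss" "is_compound C" using compound_top[OF s1 cc] A1 by auto
  define Sc where "Sc = {subst_trm C \<sigma> | C. C \<in> set ss \<and> is_compound C}"
  define \<kappa> :: "('f,'v) trm \<Rightarrow> ('f,'v) trm" where "\<kappa> = (\<lambda>t. if var_or_const t then t else Var undefined)"
  define \<mu> :: "('f,'v) trm \<Rightarrow> ('f,'v) trm" where "\<mu> = (\<lambda>t. case t of Fun f us \<Rightarrow> Fun f (map \<kappa> us) | Var x \<Rightarrow> Var x)"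
  define \<Phi> where "\<Phi> = (\<lambda>t::('f,'v) trm. if t \<in> Sc then \<mu> t else \<kappa> t)"
  define \<theta> where "\<theta> = (\<lambda>x. \<Phi> (\<sigma> x))"
  have F1: "\<not> var_or_const s" if sS: "s \<in> Sc" for s
  proof -
    obtain D where D: "D \<in> set ss" "is_compound D" "s = subst_trm D \<sigma>" using sS Sc_def by blast
    then obtain f us where "D = Fun f us" "us \<noteq> []" using compound_Fun by blast
    then show ?thesis using D by (auto simp: var_or_const_def is_var_def is_const_def)
  qed
  have F2: "subst_trm a \<theta> = \<Phi> (subst_trm a \<sigma>)" if "var_or_const a" for a
    using vc_cases[OF that]
  proof
    assume "\<exists>x. a = Var x" then show ?thesis by (auto simp: \<theta>_def)
  next
    assume "\<exists>c. a = Fun c []"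
    then obtain c where a: "a = Fun c []" by blast
    have "Fun c [] \<notin> Sc" using F1 by (auto simp: var_or_const_def is_const_def)
    then show ?thesis by (simp add: a \<Phi>_def \<kappa>_def var_or_const_def is_const_def)
  qed
  have F3: "\<sigma> x \<notin> Sc" if xA: "x \<in> vars_atom A1" for x
  proof
    assume "\<sigma> x \<in> Sc"
    then obtain D where D: "D \<in> set ss" "is_compound D" "\<sigma> x = subst_trm D \<sigma>" using Sc_def by blast
    then obtain f us where fu: "D = Fun f us" "\<forall>u\<in>set us. var_or_const u" using simp1 by blast
    have "x \<in> vars_trm D" using cov1[OF D(1,2)] xA by simp
    then have "Var x \<in> set us" using direct_var fu by metis
    then have "size (subst_trm (Var x) \<sigma>) < size (subst_trm D \<sigma>)" using size_sub_arg fu by metis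
    then show False using D by simp
  qed
  have F4: False if j: "j < length ss" and vs: "var_or_const (ss!j)" and ct: "is_compound (ts!j)" for j
  proof -
    have tin: "ts!j \<in> set ts" using j len by simp
    have sin: "ss!j \<in> set ss" using j by simp
    obtain g vs where t: "ts!j = Fun g vs" "vs \<noteq> []" "\<forall>u\<in>set vs. var_or_const u" using simp2[OF tin ct] by blast
    have eq: "subst_trm (ss!j) \<sigma> = subst_trm (ts!j) \<sigma>" using eqj j by blast
    have big: "size (\<sigma> w) < size (subst_trm (ts!j) \<sigma>)" if "w \<in> vars_atom A2" for w
    proof -
      have "w \<in> vars_trm (ts!j)" using cov2[OF tin ct] that by simp
      then have "Var w \<in> set vs" using direct_var t by metis
      then show ?thesis using size_sub_arg t by (metis subst_trm.simps(1))
    qed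
    have tnc: "\<not> var_or_const (subst_trm (ts!j) \<sigma>)" using t
      by (auto simp: var_or_const_def is_var_def is_const_def)
    have nc: "\<not>(\<exists>c. ss!j = Fun c [])" 
    proof
      assume "\<exists>c. ss!j = Fun c []"
      then obtain c where "ss!j = Fun c []" by blast
      then have "subst_trm (ts!j) \<sigma> = Fun c []" using eq by simp
      then show False using tnc by (simp add: var_or_const_def is_const_def)
    qed
    obtain y where y: "ss!j = Var y"
      using vc_cases[OF vs] nc by blast
    have y1: "y \<in> vars_atom A1" using V1 sin y by force
    have sy: "\<sigma> y = subst_trm (ts!j) \<sigma>" using eq y by simp
    obtain i where i: "i < length ss" "ss!i = C" using C(1) by (metis in_set_conv_nth)
    have tiin: "ts!i \<in> set ts" using i len by simp
    obtain f us where fu: "C = Fun f us" "us \<noteq> []" "\<forall>u\<in>set us. var_or_const u" using simp1 C by blast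
    have "y \<in> vars_trm C" using cov1[OF C] y1 by simp
    then have yus: "Var y \<in> set us" using direct_var fu by metis
    have eqi: "subst_trm C \<sigma> = subst_trm (ts!i) \<sigma>" using eqj i by metis
    have sz1: "size (\<sigma> y) < size (subst_trm C \<sigma>)" using size_sub_arg[OF yus] fu by simp
    show False
    proof (cases "var_or_const (ts!i)")
      case True
      then show False
      proof (rule vc_cases[THEN disjE])
        assume "\<exists>z. ts!i = Var z"
        then obtain z where z: "ts!i = Var z" by blast
        have "z \<in> vars_atom A2" using V2 tiin z by force
        then have "size (\<sigma> z) < size (\<sigma> y)" using big sy by simp
        then show False using sz1 eqi z by simp
      next
        assume "\<exists>c. ts!i = Fun c []"
        then show False using eqi fu by auto
      qed
    next
      case False
      then have cti: "is_compound (ts!i)" using comp_iff by blast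
      obtain f' ws where w: "ts!i = Fun f' ws" "\<forall>u\<in>set ws. var_or_const u" using simp2[OF tiin cti] by blast
      have "map (\<lambda>t. subst_trm t \<sigma>) us = map (\<lambda>t. subst_trm t \<sigma>) ws" using eqi fu w by simp
      moreover have "\<sigma> y \<in> set (map (\<lambda>t. subst_trm t \<sigma>) us)" using yus
        by (metis image_eqI list.set_map subst_trm.simps(1))
      ultimately have "\<sigma> y \<in> set (map (\<lambda>t. subst_trm t \<sigma>) ws)" by simp
      then obtain w0 where w0: "w0 \<in> set ws" "\<sigma> y = subst_trm w0 \<sigma>" by auto
      have vw0: "var_or_const w0" using w(2) w0(1) by blast
      show False using vc_cases[OF vw0]
      proof (elim disjE exE)
        fix c assume "w0 = Fun c []" then show False using w0 sy tnc
          by (simp add: var_or_const_def is_const_def)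
      next
        fix w' assume w': "w0 = Var w'"
        have "w' \<in> vars_trm (ts!i)" using w w0 w' by force
        then have "w' \<in> vars_atom A2" using V2 tiin by blast
        then have "size (\<sigma> w') < size (\<sigma> y)" using big sy by simp
        then show False using w0 w' by simp
      qed
    qed
  qed
  have pos: "subst_trm (ss!j) \<theta> = subst_trm (ts!j) \<theta>" if j: "j < length ss" for j
  proof -
    have tin: "ts!j \<in> set ts" using j len by simp
    have sin: "ss!j \<in> set ss" using j by simp
    have eq: "subst_trm (ss!j) \<sigma> = subst_trm (ts!j) \<sigma>" using eqj j by blast
    show ?thesis
    proof (cases "var_or_const (ss!j)")
      case vs: True
      show ?thesis
      proof (cases "var_or_const (ts!j)")
        case True then show ?thesis using F2[OF vs] F2[OF True] eq by simp
      next
        case False then show ?thesis using F4[OF j vs] comp_iff by blast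
      qed
    next
      case cs: False
      then have cs': "is_compound (ss!j)" using comp_iff by blast
      obtain f us where s: "ss!j = Fun f us" "us \<noteq> []" "\<forall>u\<in>set us. var_or_const u" using simp1[OF sin cs'] by blast
      have sth: "subst_trm (ss!j) \<theta> = Fun f (map \<Phi> (map (\<lambda>t. subst_trm t \<sigma>) us))"
        using s F2 by simp
      show ?thesis
      proof (cases "var_or_const (ts!j)")
        case True
        show ?thesis using vc_cases[OF True]
        proof (elim disjE exE)
          fix c assume "ts!j = Fun c []" then show ?thesis using eq s by simp
        next
          fix z assume z: "ts!j = Var z"
          have inSc: "subst_trm (ss!j) \<sigma> \<in> Sc" using Sc_def sin cs' by blast
          have "subst_trm (ts!j) \<theta> = \<Phi> (subst_trm (ss!j) \<sigma>)" using z eq by (simp add: \<theta>_def)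
          also have "\<dots> = Fun f (map \<kappa> (map (\<lambda>t. subst_trm t \<sigma>) us))"
            using inSc s by (simp add: \<Phi>_def \<mu>_def)
          also have "\<dots> = Fun f (map \<Phi> (map (\<lambda>t. subst_trm t \<sigma>) us))"
          proof -
            have "\<Phi> (subst_trm u \<sigma>) = \<kappa> (subst_trm u \<sigma>)" if u: "u \<in> set us" for u
            proof -
              have "(\<exists>x. u = Var x) \<or> (\<exists>c. u = Fun c [])"
                using vc_cases s(3) u by blast
              then have "subst_trm u \<sigma> \<notin> Sc"
              proof (elim disjE exE)
                fix x assume x: "u = Var x"
                have "x \<in> vars_trm (ss!j)" using s u x by force
                then have "x \<in> vars_atom A1" using cov1[OF sin cs'] by simp
                then show ?thesis using F3 x by simp
              next
                fix c assume "u = Fun c []"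
                then show ?thesis using F1 by (auto simp: var_or_const_def is_const_def)
              qed
              then show ?thesis by (simp add: \<Phi>_def)
            qed
            then show ?thesis by simp
          qed
          finally show ?thesis using sth by simp
        qed
      next
        case False
        then have ct: "is_compound (ts!j)" using comp_iff by blast
        obtain g ws where t: "ts!j = Fun g ws" "\<forall>u\<in>set ws. var_or_const u" using simp2[OF tin ct] by blast
        have tth: "subst_trm (ts!j) \<theta> = Fun g (map \<Phi> (map (\<lambda>t. subst_trm t \<sigma>) ws))"
          using t F2 by simp
        have M: "f = g \<and> map (\<lambda>t. subst_trm t \<sigma>) us = map (\<lambda>t. subst_trm t \<sigma>) ws"
          using eq s t by simp
        show ?thesis unfolding sth tth using M by simp
      qed
    qed
  qed
  have unif: "is_unifier \<theta> A1 A2"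
    unfolding is_unifier_def A1 A2 using pq pos len by (auto intro!: nth_equalityI)
  have "var_or_const (\<theta> x)" if "x \<in> vars_atom A1" for x
    using F3[OF that] by (simp add: \<theta>_def \<Phi>_def \<kappa>_def var_or_const_def is_var_def)
  then show ?thesis using unif by blast
qed


lemma atom_of_subst: "atom_of (subst_lit L \<sigma>) = subst_atom (atom_of L) \<sigma>"
  by (cases L) auto

lemma args_subst: "args_atom (subst_atom a \<sigma>) = map (\<lambda>t. subst_trm t \<sigma>) (args_atom a)"
  by (cases a) auto

lemma vars_atom_subst: "vars_atom (subst_atom a \<sigma>) = (\<Union>x\<in>vars_atom a. vars_trm (\<sigma> x))"
  unfolding vars_atom_def args_subst by (auto simp: vars_subst)

lemma vars_lit_subst: "vars_lit (subst_lit L \<sigma>) = (\<Union>x\<in>vars_lit L. vars_trm (\<sigma> x))"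
  unfolding vars_lit_def atom_of_subst by (rule vars_atom_subst)

lemma vars_lits_subst: "vars_lits (subst_lits Ls \<sigma>) = (\<Union>x\<in>vars_lits Ls. vars_trm (\<sigma> x))"
  unfolding vars_lits_def subst_lits_def by (auto simp: vars_lit_subst)

lemma flat_subst: "flat_lit L \<Longrightarrow> (\<forall>x\<in>vars_lit L. var_or_const (\<sigma> x)) \<Longrightarrow> flat_lit (subst_lit L \<sigma>)"
  unfolding flat_lit_def flat_atom_def atom_of_subst args_subst vars_lit_def vars_atom_def
  using vc_subst_vc by fastforce

theorem mainTheorem5:
  fixes A1 A2 :: "('p, 'f, 'v) atom"
    and \<sigma> :: "('f, 'v) subst"
    and G :: "('p, 'f, 'v) literal"
    and \<G> :: "('p, 'f, 'v) literal set"
  assumes "simple_atom A1" and "covering_atom A1"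
    and "simple_atom A2" and "covering_atom A2"
    and "is_mgu \<sigma> A1 A2"
    and "contains_compound A1"
    and "flat_lit G"
    and "\<forall>L\<in>\<G>. flat_lit L"
    and "vars_atom A1 = vars_lit G"
    and "vars_lit G = vars_lits \<G>"
  shows "flat_lit (subst_lit G \<sigma>)
    \<and> (\<forall>L\<in>subst_lits \<G> \<sigma>. flat_lit L)
    \<and> vars_atom (subst_atom A1 \<sigma>) = vars_lit (subst_lit G \<sigma>)
    \<and> vars_lit (subst_lit G \<sigma>) = vars_lits (subst_lits \<G> \<sigma>)"
proof -
  have u: "is_unifier \<sigma> A1 A2" using assms(5) by (simp add: is_mgu_def)
  obtain \<theta> where th: "is_unifier \<theta> A1 A2" "\<forall>x\<in>vars_atom A1. var_or_const (\<theta> x)"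
    using key[OF assms(1-4) u assms(6)] by blast
  obtain \<delta> where d: "\<forall>x. \<theta> x = subst_trm (\<sigma> x) \<delta>" using assms(5) th(1) unfolding is_mgu_def by blast
  have hv: "\<forall>x\<in>vars_atom A1. var_or_const (\<sigma> x)" using th(2) d vc_subst by metis
  have f1: "flat_lit (subst_lit G \<sigma>)" using flat_subst[OF assms(7)] hv assms(9) by simp
  have f2: "\<forall>L\<in>subst_lits \<G> \<sigma>. flat_lit L"
  proof
    fix L assume "L \<in> subst_lits \<G> \<sigma>"
    then obtain L0 where L0: "L0 \<in> \<G>" "L = subst_lit L0 \<sigma>" by (auto simp: subst_lits_def)
    have "vars_lit L0 \<subseteq> vars_atom A1" using L0(1) assms(9,10) by (auto simp: vars_lits_def)
    then show "flat_lit L" using flat_subst[of L0 \<sigma>] L0 assms(8) hv by blast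
  qed
  show ?thesis using f1 f2 assms(9,10) by (simp add: vars_atom_subst vars_lit_subst vars_lits_subst)
qed

end
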